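(* If $P$ is a generic set of $n>5$ points in the plane, then $\operatorname{cr}(P)\ge 1$.
   Context: A finite planar point set is in general position if no three of its points are collinear. It is generic if it is in general position and every subset of it has a unique (Euclidean) minimum spanning tree (MST); for a generic set $X$, $T_X$ denotes the MST of $X$, drawn with straight-line edges. For disjoint point sets $R,B$ with $R\cup B$ generic, $\operatorname{cr}(R,B)$ denotes the number of crossings between the edges of $T_R$ and the edges of $T_B$. For a generic point set $P$, $\operatorname{cr}(P)=\max \operatorname{cr}(R,B)$, the maximum over all partitions $P=R\cup B$ into two disjoint sets. *)

theory Defs
  imports "HOL-Analysis.Analysis"
begin

type_synonym point = "real ^ 2"

definition all_edges :: "point set \<Rightarrow> point set set" where
  "all_edges X = {{x, y} | x y. x \<in> X \<and> y \<in> X \<and> x \<noteq> y}"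

text \<open>Euclidean length of an edge {x,y} (well defined since dist is symmetric).\<close>
definition edge_len :: "point set \<Rightarrow> real" where
  "edge_len e = (SOME d. \<exists>x y. e = {x, y} \<and> d = dist x y)"

definition graph_connected :: "point set \<Rightarrow> point set set \<Rightarrow> bool" where
  "graph_connected X T \<longleftrightarrow>
     (\<forall>x\<in>X. \<forall>y\<in>X. (x, y) \<in> ({(a, b). {a, b} \<in> T})\<^sup>*)"

definition spanning_tree :: "point set \<Rightarrow> point set set \<Rightarrow> bool" where
  "spanning_tree X T \<longleftrightarrow> T \<subseteq> all_edges X \<and> graph_connected X T \<and> card T = card X - 1"

definition tree_weight :: "point set set \<Rightarrow> real" where
  "tree_weight T = (\<Sum>e\<in>T. edge_len e)"

definition is_mst :: "point set \<Rightarrow> point set set \<Rightarrow> bool" where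
  "is_mst X T \<longleftrightarrow> spanning_tree X T \<and>
     (\<forall>T'. spanning_tree X T' \<longrightarrow> tree_weight T \<le> tree_weight T')"

definition general_position :: "point set \<Rightarrow> bool" where
  "general_position P \<longleftrightarrow>
     (\<forall>a\<in>P. \<forall>b\<in>P. \<forall>c\<in>P. a \<noteq> b \<and> a \<noteq> c \<and> b \<noteq> c \<longrightarrow> \<not> collinear {a, b, c})"

definition generic :: "point set \<Rightarrow> bool" where
  "generic P \<longleftrightarrow> finite P \<and> general_position P \<and> (\<forall>S\<subseteq>P. \<exists>!T. is_mst S T)"

definition mst :: "point set \<Rightarrow> point set set" where
  "mst X = (THE T. is_mst X T)"

text \<open>Number of crossing pairs (edge of T_R, edge of T_B); edges are straight segments
  (convex hull of the two endpoints).\<close>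
definition cr :: "point set \<Rightarrow> point set \<Rightarrow> nat" where
  "cr R B = card {(e, f). e \<in> mst R \<and> f \<in> mst B \<and> convex hull e \<inter> convex hull f \<noteq> {}}"

definition cr_max :: "point set \<Rightarrow> nat" where
  "cr_max P = Max {cr R B | R B. R \<union> B = P \<and> R \<inter> B = {}}"

end

theory Submission
  imports Defs
begin

definition orient :: "point \<Rightarrow> point \<Rightarrow> point \<Rightarrow> real" where
  "orient p q r = (q$1 - p$1) * (r$2 - p$2) - (q$2 - p$2) * (r$1 - p$1)"

definition sd :: "point \<Rightarrow> point \<Rightarrow> real" where
  "sd x y = (x$1 - y$1)^2 + (x$2 - y$2)^2"

lemma dist_sd: "dist x y = sqrt (sd x y)"
  by (simp add: dist_norm norm_vec_def L2_set_def sum_2 sd_def power2_eq_square)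

lemma sd_nonneg: "sd x y \<ge> 0" by (simp add: sd_def)

lemma dist_le_iff_sd: "dist x y \<le> dist u v \<longleftrightarrow> sd x y \<le> sd u v"
  by (simp add: dist_sd)

lemma sd_pos: "x \<noteq> y \<Longrightarrow> sd x y > 0"
proof -
  assume "x \<noteq> y"
  then have "dist x y > 0" by simp
  then show ?thesis by (simp add: dist_sd)
qed

lemma orient_swap12: "orient q p r = - orient p q r" by (simp add: orient_def algebra_simps)
lemma orient_swap23: "orient p r q = - orient p q r" by (simp add: orient_def algebra_simps)
lemma orient_cyc: "orient q r p = orient p q r" by (simp add: orient_def algebra_simps)
lemma orient_same1: "orient p p r = 0" by (simp add: orient_def)
lemma orient_same2: "orient p q p = 0" by (simp add: orient_def)
lemma orient_same3: "orient p q q = 0" by (simp add: orient_def)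

lemma orient_affine:
  "orient p q ((1 - m) *\<^sub>R s + m *\<^sub>R t) = (1 - m) * orient p q s + m * orient p q t"
  by (simp add: orient_def algebra_simps)

lemma orient_G:
  "orient b c w * orient p q a + orient c a w * orient p q b + orient a b w * orient p q c
   = orient a b c * orient p q w"
  by (simp add: orient_def algebra_simps)

lemma orient_sum: "orient u v s + orient v p s + orient p u s = orient u v p"
  by (simp add: orient_def algebra_simps)


lemma collinear_of_orient:
  assumes "orient a b c = 0" shows "collinear {a, b, c}"
proof (cases "a = b")
  case True then show ?thesis by (simp add: collinear_2)
next
  case False
  have c3: "collinear {a,b,c} = collinear {0, a - b, c - b}"
    by (rule collinear_3) simp
  have o: "(b$1 - a$1) * (c$2 - a$2) - (b$2 - a$2) * (c$1 - a$1) = 0" using assms by (simp add: orient_def)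
  have ne: "a$1 \<noteq> b$1 \<or> a$2 \<noteq> b$2" using False by (metis exhaust_2 vec_eq_iff)
  show ?thesis
  proof (cases "a$1 = b$1")
    case True
    then have h2: "a$2 - b$2 \<noteq> 0" using ne by simp
    let ?k = "(c$2 - b$2) / (a$2 - b$2)"
    have "(c$1 - b$1) * (a$2 - b$2) = 0" using True o by (simp add: algebra_simps)
    then have e1: "c$1 - b$1 = ?k * (a$1 - b$1)" using True h2 by simp
    have e2: "c$2 - b$2 = ?k * (a$2 - b$2)" using h2 by (simp add: field_simps)
    have "c - b = ?k *\<^sub>R (a - b)"
      unfolding vec_eq_iff forall_2 using e1 e2 by simp
    then show ?thesis unfolding c3 collinear_lemma by blast
  next
    case h1: False
    then have h1': "a$1 - b$1 \<noteq> 0" by simp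
    let ?k = "(c$1 - b$1) / (a$1 - b$1)"
    have e1: "c$1 - b$1 = ?k * (a$1 - b$1)" using h1' by (simp add: field_simps)
    have "(c$2 - b$2) * (a$1 - b$1) = (c$1 - b$1) * (a$2 - b$2)" using o by (simp add: algebra_simps)
    then have e2: "c$2 - b$2 = ?k * (a$2 - b$2)" using h1' by (simp add: field_simps)
    have "c - b = ?k *\<^sub>R (a - b)"
      unfolding vec_eq_iff forall_2 using e1 e2 by simp
    then show ?thesis unfolding c3 collinear_lemma by blast
  qed
qed

lemma edge_len_pair: "edge_len {x, y} = dist x y"
  unfolding edge_len_def
proof (rule someI2)
  show "\<exists>x' y'. {x, y} = {x', y'} \<and> dist x y = dist x' y'" by blast
next
  fix d assume "\<exists>x' y'. {x, y} = {x', y'} \<and> d = dist x' y'"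
  then obtain x' y' where "{x, y} = {x', y'}" "d = dist x' y'" by blast
  then show "d = dist x y" by (auto simp: doubleton_eq_iff dist_commute)
qed

lemma generic_is_mst: "generic P \<Longrightarrow> S \<subseteq> P \<Longrightarrow> is_mst S (mst S)"
  unfolding generic_def mst_def by (metis theI')

lemma generic_mst_eq: "generic P \<Longrightarrow> S \<subseteq> P \<Longrightarrow> is_mst S T \<Longrightarrow> mst S = T"
  unfolding generic_def mst_def by (metis the1_equality)

lemma all_edges_2: "all_edges {u, v} = (if u = v then {} else {{u, v}})"
  unfolding all_edges_def by (auto simp: doubleton_eq_iff)

lemma all_edges_3: "all_edges {u, v, p} \<subseteq> {{u, v}, {u, p}, {v, p}}"
  unfolding all_edges_def by (auto simp: insert_commute)

lemma mst2:
  assumes g: "generic P" and s: "{u, v} \<subseteq> P" and ne: "u \<noteq> v"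
  shows "mst {u, v} = {{u, v}}"
proof -
  have st: "spanning_tree {u,v} {{u,v}}"
    unfolding spanning_tree_def graph_connected_def using ne
    by (auto simp: all_edges_2 insert_commute intro: r_into_rtrancl)
  have "is_mst {u,v} {{u,v}}"
    unfolding is_mst_def
  proof (intro conjI allI impI st)
    fix T' assume "spanning_tree {u,v} T'"
    then have "T' \<subseteq> {{u,v}}" "card T' = 1" unfolding spanning_tree_def using ne by (auto simp: all_edges_2)
    then have "T' = {{u,v}}" by (metis card_1_singletonE subset_singletonD zero_neq_one card.empty)
    then show "tree_weight {{u, v}} \<le> tree_weight T'" by simp
  qed
  then show ?thesis using generic_mst_eq[OF g s] by simp
qed

lemma mst3:
  assumes g: "generic P" and s: "{u, v, p} \<subseteq> P" and d: "u \<noteq> v" "u \<noteq> p" "v \<noteq> p"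
    and l1: "dist u p \<le> dist u v" and l2: "dist v p \<le> dist u v"
  shows "mst {u, v, p} = {{u, p}, {v, p}}"
proof -
  have e: "{u,p} \<noteq> {v,p}" using d by (auto simp: doubleton_eq_iff)
  have sub: "{{u, p}, {v, p}} \<subseteq> all_edges {u,v,p}"
    unfolding all_edges_def using d by blast
  let ?E = "{(x, y). {x, y} \<in> {{u, p}, {v, p}}}"
  have up: "(u,p) \<in> ?E" "(p,u) \<in> ?E" "(v,p) \<in> ?E" "(p,v) \<in> ?E" by (auto simp: insert_commute)
  have "\<forall>x\<in>{u,v,p}. \<forall>y\<in>{u,v,p}. (x, y) \<in> ?E\<^sup>*"
    using up by (auto intro: r_into_rtrancl rtrancl_trans)
  then have st: "spanning_tree {u,v,p} {{u, p}, {v, p}}"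
    unfolding spanning_tree_def graph_connected_def using sub d e by auto
  have w: "tree_weight {{u, p}, {v, p}} = dist u p + dist v p"
    unfolding tree_weight_def using e by (simp add: edge_len_pair)
  have "is_mst {u,v,p} {{u, p}, {v, p}}"
    unfolding is_mst_def
  proof (intro conjI allI impI st)
    fix T' assume "spanning_tree {u,v,p} T'"
    then have T'sub0: "T' \<subseteq> all_edges {u,v,p}" and c0: "card T' = card {u,v,p} - 1"
      unfolding spanning_tree_def by auto
    have T'sub: "T' \<subseteq> {{u, v}, {u, p}, {v, p}}" using T'sub0 all_edges_3 by blast
    have c: "card T' = 2" using c0 d by simp
    from c obtain e1 e2 where T': "T' = {e1, e2}" "e1 \<noteq> e2" by (meson card_2_iff)
    have we: "tree_weight T' = edge_len e1 + edge_len e2"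
      unfolding tree_weight_def T' using T'(2) by simp
    have el: "edge_len {u,v} = dist u v" "edge_len {u,p} = dist u p" "edge_len {v,p} = dist v p"
      by (simp_all add: edge_len_pair)
    have "e1 \<in> {{u, v}, {u, p}, {v, p}}" "e2 \<in> {{u, v}, {u, p}, {v, p}}" using T'sub T' by auto
    then show "tree_weight {{u, p}, {v, p}} \<le> tree_weight T'"
      unfolding w we using T'(2) el l1 l2 by auto
  qed
  then show ?thesis using generic_mst_eq[OF g s] by simp
qed

lemma path_cut:
  assumes "(x, y) \<in> E\<^sup>*" "Q x" "\<not> Q y"
  shows "\<exists>u v. (u, v) \<in> E \<and> Q u \<and> \<not> Q v"
  using assms by (induction rule: rtrancl_induct) auto

lemma mst_cut:
  assumes g: "generic P" and B: "B \<subseteq> P" and s0: "s0 \<in> B" and t0: "t0 \<in> B" and "Q s0" "\<not> Q t0"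
  shows "\<exists>s t. {s, t} \<in> mst B \<and> s \<in> B \<and> t \<in> B \<and> s \<noteq> t \<and> Q s \<and> \<not> Q t"
proof -
  have m: "is_mst B (mst B)" by (rule generic_is_mst[OF g B])
  then have c: "graph_connected B (mst B)" and sub: "mst B \<subseteq> all_edges B"
    unfolding is_mst_def spanning_tree_def by auto
  then have "(s0, t0) \<in> {(a, b). {a, b} \<in> mst B}\<^sup>*" unfolding graph_connected_def using s0 t0 by auto
  from path_cut[where Q=Q, OF this] assms obtain s t where st: "{s, t} \<in> mst B" "Q s" "\<not> Q t" by auto
  then have "{s,t} \<in> all_edges B" using sub by auto
  then have "s \<in> B \<and> t \<in> B \<and> s \<noteq> t" unfolding all_edges_def by (auto simp: doubleton_eq_iff)
  then show ?thesis using st by blast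
qed

lemma finite_mst: "generic P \<Longrightarrow> S \<subseteq> P \<Longrightarrow> finite (mst S)"
proof -
  assume g: "generic P" and S: "S \<subseteq> P"
  then have "mst S \<subseteq> all_edges S" using generic_is_mst unfolding is_mst_def spanning_tree_def by blast
  moreover have "all_edges S \<subseteq> Pow S" unfolding all_edges_def by auto
  moreover have "finite S" using g S unfolding generic_def by (meson finite_subset)
  ultimately show ?thesis by (meson finite_Pow_iff finite_subset)
qed

lemma cr_max_pos:
  assumes g: "generic P" and R: "R \<subseteq> P" and e: "e \<in> mst R" and f: "f \<in> mst (P - R)"
    and i: "convex hull e \<inter> convex hull f \<noteq> {}"
  shows "cr_max P \<ge> 1"
proof -
  have fP: "finite P" using g unfolding generic_def by auto
  let ?S = "{(e, f). e \<in> mst R \<and> f \<in> mst (P - R) \<and> convex hull e \<inter> convex hull f \<noteq> {}}"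
  have "?S \<subseteq> mst R \<times> mst (P - R)" by auto
  then have "finite ?S" using finite_mst[OF g R] finite_mst[OF g, of "P - R"]
    by (meson Diff_subset finite_SigmaI finite_subset)
  moreover have "(e, f) \<in> ?S" using e f i by auto
  ultimately have c1: "cr R (P - R) \<ge> 1" unfolding cr_def
    by (metis (no_types, lifting) card_0_eq empty_iff less_one linorder_not_le)
  let ?C = "{cr R B | R B. R \<union> B = P \<and> R \<inter> B = {}}"
  have "?C \<subseteq> (\<lambda>R. cr R (P - R)) ` Pow P"
  proof
    fix x assume "x \<in> ?C"
    then obtain R' B' where "x = cr R' B'" "R' \<union> B' = P" "R' \<inter> B' = {}" by blast
    then have "B' = P - R'" "R' \<in> Pow P" by auto
    then show "x \<in> (\<lambda>R. cr R (P - R)) ` Pow P" using \<open>x = cr R' B'\<close> by blast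
  qed
  then have "finite ?C" using fP by (meson finite_Pow_iff finite_imageI finite_subset)
  moreover have "cr R (P - R) \<in> ?C" using R by blast
  ultimately have "cr R (P - R) \<le> cr_max P" unfolding cr_max_def by (simp add: Max_ge)
  then show ?thesis using c1 by linarith
qed

lemma gp_orient:
  assumes g: "generic P" and "x \<in> P" "y \<in> P" "z \<in> P" "x \<noteq> y" "x \<noteq> z" "y \<noteq> z"
  shows "orient x y z \<noteq> 0"
proof
  assume "orient x y z = 0"
  then have "collinear {x, y, z}" by (rule collinear_of_orient)
  moreover have "general_position P" using g unfolding generic_def by simp
  ultimately show False using assms(2-) unfolding general_position_def by blast
qed

lemma bary1: "orient u v w * z$1 = orient v w z * u$1 + orient w u z * v$1 + orient u v z * w$1"
  by (simp add: orient_def algebra_simps)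
lemma bary2: "orient u v w * z$2 = orient v w z * u$2 + orient w u z * v$2 + orient u v z * w$2"
  by (simp add: orient_def algebra_simps)

lemma in_seg: "0 \<le> m \<Longrightarrow> m \<le> 1 \<Longrightarrow> (1 - m) *\<^sub>R s + m *\<^sub>R t \<in> closed_segment s t"
  unfolding closed_segment_def by blast

lemma SEG:
  assumes D: "orient u v w > 0" and z0: "orient u v z = 0"
    and n1: "orient v w z \<ge> 0" and n2: "orient w u z \<ge> 0"
  shows "z \<in> closed_segment u v"
proof -
  define D' where "D' = orient u v w"
  define m where "m = orient w u z / D'"
  have s: "orient u v z + orient v w z + orient w u z = D'" unfolding D'_def using orient_sum[of u v z w] by simp
  have Dp: "D' > 0" using D D'_def by simp
  have m0: "0 \<le> m" unfolding m_def using n2 Dp by simp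
  have m1: "m \<le> 1" unfolding m_def using n1 s z0 Dp by (simp add: field_simps)
  have 1: "1 - m = orient v w z / D'" unfolding m_def using s z0 Dp by (simp add: field_simps)
  have "z = (1 - m) *\<^sub>R u + m *\<^sub>R v"
  proof -
    have b1: "D' * z$1 = orient v w z * u$1 + orient w u z * v$1" using bary1[of u v w z] z0 D'_def by simp
    have b2: "D' * z$2 = orient v w z * u$2 + orient w u z * v$2" using bary2[of u v w z] z0 D'_def by simp
    have c1: "z$1 = (1 - m) * u$1 + m * v$1"
    proof -
      have "z$1 = (orient v w z * u$1 + orient w u z * v$1) / D'" using b1 Dp by (simp add: eq_divide_eq mult.commute)
      also have "\<dots> = (orient v w z / D') * u$1 + (orient w u z / D') * v$1" by (simp add: add_divide_distrib)
      finally show ?thesis by (simp only: 1[symmetric] m_def[symmetric])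
    qed
    have c2: "z$2 = (1 - m) * u$2 + m * v$2"
    proof -
      have "z$2 = (orient v w z * u$2 + orient w u z * v$2) / D'" using b2 Dp by (simp add: eq_divide_eq mult.commute)
      also have "\<dots> = (orient v w z / D') * u$2 + (orient w u z / D') * v$2" by (simp add: add_divide_distrib)
      finally show ?thesis by (simp only: 1[symmetric] m_def[symmetric])
    qed
    show ?thesis unfolding vec_eq_iff forall_2 using c1 c2 by simp
  qed
  then show ?thesis using in_seg[OF m0 m1] by simp
qed

lemma HIT:
  assumes A: "orient x y s > 0" and B: "orient x y t \<le> 0" and D: "orient x y w > 0"
    and c1: "orient x y s * orient y w t - orient x y t * orient y w s \<ge> 0"
    and c2: "orient x y s * orient w x t - orient x y t * orient w x s \<ge> 0"
  shows "closed_segment s t \<inter> closed_segment x y \<noteq> {}"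
proof -
  define a where "a = orient x y s"
  define b where "b = orient x y t"
  define m where "m = a / (a - b)"
  define z where "z = (1 - m) *\<^sub>R s + m *\<^sub>R t"
  have ab: "a - b > 0" using A B a_def b_def by simp
  have m0: "0 \<le> m" "m \<le> 1" unfolding m_def using A B ab a_def b_def by (auto simp: field_simps)
  have 1: "1 - m = - b / (a - b)" unfolding m_def using ab by (simp add: field_simps)
  have fz: "orient p q z = (a * orient p q t - b * orient p q s) / (a - b)" for p q
  proof -
    have "orient p q z = (1 - m) * orient p q s + m * orient p q t" unfolding z_def by (rule orient_affine)
    also have "\<dots> = (- b / (a - b)) * orient p q s + m * orient p q t" by (simp only: 1)
    also have "\<dots> = (- b / (a - b)) * orient p q s + (a / (a - b)) * orient p q t" by (simp only: m_def)
    also have "\<dots> = (a * orient p q t - b * orient p q s) / (a - b)" by (simp add: diff_divide_distrib add_divide_distrib)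
    finally show ?thesis .
  qed
  have z0: "orient x y z = 0" using fz[of x y] a_def b_def by simp
  have n1: "orient y w z \<ge> 0" using fz[of y w] c1 ab a_def b_def by simp
  have n2: "orient w x z \<ge> 0" using fz[of w x] c2 ab a_def b_def by simp
  have "z \<in> closed_segment x y" by (rule SEG[OF D z0 n1 n2])
  moreover have "z \<in> closed_segment s t" unfolding z_def by (rule in_seg[OF m0])
  ultimately show ?thesis by blast
qed

lemma EXIT:
  assumes s1: "orient u v s > 0" and s2: "orient v p s > 0" and s3: "orient p u s > 0"
    and t1: "orient u v t \<ge> 0" and t: "orient v p t \<le> 0 \<or> orient p u t \<le> 0"
  shows "closed_segment s t \<inter> closed_segment v p \<noteq> {} \<or> closed_segment s t \<inter> closed_segment p u \<noteq> {}"
proof -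
  define A1 where "A1 = orient v p s"
  define B1 where "B1 = orient v p t"
  define A2 where "A2 = orient p u s"
  define B2 where "B2 = orient p u t"
  have D: "orient u v p > 0" using orient_sum[of u v s p] s1 s2 s3 by linarith
  have Dvp: "orient v p u > 0" using D unfolding orient_def by argo
  have Dpu: "orient p u v > 0" using D unfolding orient_def by argo
  have base: "A * orient u v t - B * orient u v s \<ge> 0" if "A > 0" "B \<le> 0" for A B
  proof -
    have "A * orient u v t \<ge> 0" using that t1 by simp
    moreover have "B * orient u v s \<le> 0" using that s1 by (simp add: mult_nonpos_nonneg)
    ultimately show ?thesis by linarith
  qed
  have K1: "closed_segment s t \<inter> closed_segment v p \<noteq> {}" if "B1 \<le> 0" "A1 * B2 - B1 * A2 \<ge> 0"
    by (rule HIT[OF s2 _ Dvp]) (use that base[of A1 B1] s2 in \<open>auto simp: A1_def B1_def A2_def B2_def\<close>)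
  have K2: "closed_segment s t \<inter> closed_segment p u \<noteq> {}" if "B2 \<le> 0" "A2 * B1 - B2 * A1 \<ge> 0"
    by (rule HIT[OF s3 _ Dpu]) (use that base[of A2 B2] s3 in \<open>auto simp: A1_def B1_def A2_def B2_def\<close>)
  have pos: "A1 > 0" "A2 > 0" using s2 s3 A1_def A2_def by auto
  show ?thesis
  proof (cases "B1 \<le> 0")
    case True
    show ?thesis
    proof (cases "A1 * B2 - B1 * A2 \<ge> 0")
      case True then show ?thesis using K1 \<open>B1 \<le> 0\<close> by blast
    next
      case False
      then have "B2 < 0"
      proof -
        have "B1 * A2 \<le> 0" using \<open>B1 \<le> 0\<close> pos by (simp add: mult_nonpos_nonneg)
        then have "A1 * B2 < 0" using False by linarith
        then show ?thesis using pos by (simp add: mult_less_0_iff)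
      qed
      then show ?thesis using K2 False by (auto simp: algebra_simps)
    qed
  next
    case False
    then have "B2 \<le> 0" using t B1_def B2_def by auto
    have "B2 * A1 \<le> 0" using \<open>B2 \<le> 0\<close> pos by (simp add: mult_nonpos_nonneg)
    moreover have "A2 * B1 > 0" using False pos by simp
    ultimately show ?thesis using K2 \<open>B2 \<le> 0\<close> by auto
  qed
qed

definition dt :: "point \<Rightarrow> point \<Rightarrow> point \<Rightarrow> real" where
  "dt a b w = (w$1 - a$1) * (b$1 - a$1) + (w$2 - a$2) * (b$2 - a$2)"

lemma dt_affine: "dt a b ((1 - m) *\<^sub>R s + m *\<^sub>R t) = (1 - m) * dt a b s + m * dt a b t"
  by (simp add: dt_def algebra_simps)

lemma dt_sd: "2 * dt a b w = sd w a + sd a b - sd w b"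
  by (simp add: dt_def sd_def power2_eq_square algebra_simps)

lemma sd_comm: "sd a b = sd b a" by (simp add: sd_def power2_eq_square algebra_simps)

lemma dt_sum: "dt a b z + dt b a z = sd a b"
  by (simp add: dt_def sd_def power2_eq_square algebra_simps)

lemma SEG2:
  assumes ne: "a \<noteq> b" and z0: "orient a b z = 0" and h1: "dt a b z \<ge> 0" and h2: "dt b a z \<ge> 0"
  shows "z \<in> closed_segment a b"
proof -
  define S where "S = sd a b"
  have Sp: "S > 0" using sd_pos[OF ne] S_def by simp
  define m where "m = dt a b z / S"
  have m0: "0 \<le> m" using h1 Sp m_def by simp
  have 1: "1 - m = dt b a z / S" using dt_sum[of a b z] Sp unfolding m_def S_def[symmetric] by (simp add: field_simps)
  have "dt b a z / S \<ge> 0" using h2 Sp by simp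
  then have m1: "m \<le> 1" using 1 by linarith
  have i1: "S * z$1 = dt b a z * a$1 + dt a b z * b$1 - orient a b z * (b$2 - a$2)"
    unfolding S_def by (simp add: dt_def sd_def orient_def power2_eq_square algebra_simps)
  have i2: "S * z$2 = dt b a z * a$2 + dt a b z * b$2 + orient a b z * (b$1 - a$1)"
    unfolding S_def by (simp add: dt_def sd_def orient_def power2_eq_square algebra_simps)
  have c1: "z$1 = (1 - m) * a$1 + m * b$1"
  proof -
    have "z$1 = (dt b a z * a$1 + dt a b z * b$1) / S" using i1 z0 Sp by (simp add: eq_divide_eq mult.commute)
    also have "\<dots> = (dt b a z / S) * a$1 + (dt a b z / S) * b$1" by (simp add: add_divide_distrib)
    finally show ?thesis by (simp only: 1[symmetric] m_def[symmetric])
  qed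
  have c2: "z$2 = (1 - m) * a$2 + m * b$2"
  proof -
    have "z$2 = (dt b a z * a$2 + dt a b z * b$2) / S" using i2 z0 Sp by (simp add: eq_divide_eq mult.commute)
    also have "\<dots> = (dt b a z / S) * a$2 + (dt a b z / S) * b$2" by (simp add: add_divide_distrib)
    finally show ?thesis by (simp only: 1[symmetric] m_def[symmetric])
  qed
  have "z = (1 - m) *\<^sub>R a + m *\<^sub>R b" unfolding vec_eq_iff forall_2 using c1 c2 by simp
  then show ?thesis using in_seg[OF m0 m1] by simp
qed

lemma LINE:
  assumes A: "orient x y s > 0" and B: "orient x y t \<le> 0"
  shows "\<exists>m. 0 \<le> m \<and> m \<le> 1 \<and> orient x y ((1 - m) *\<^sub>R s + m *\<^sub>R t) = 0"
proof -
  define a where "a = orient x y s"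
  define b where "b = orient x y t"
  define m where "m = a / (a - b)"
  have ab: "a - b > 0" using A B a_def b_def by simp
  have m0: "0 \<le> m" "m \<le> 1" unfolding m_def using A B ab a_def b_def by (auto simp: field_simps)
  have "orient x y ((1 - m) *\<^sub>R s + m *\<^sub>R t) = (1 - m) * a + m * b"
    unfolding orient_affine a_def b_def ..
  also have "\<dots> = 0" unfolding m_def using ab by (simp add: field_simps)
  finally show ?thesis using m0 by blast
qed

lemma OBT:
  assumes la: "orient b c y > 0" and lb: "orient c a y > 0" and lc: "orient a b y > 0"
  shows "(sd c a > sd c y \<and> sd c a > sd a y) \<or> (sd b c > sd b y \<and> sd b c > sd c y)"
proof -
  define P1 where "P1 = (a$1 - y$1) * (c$1 - y$1) + (a$2 - y$2) * (c$2 - y$2)"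
  define P2 where "P2 = (b$1 - y$1) * (c$1 - y$1) + (b$2 - y$2) * (c$2 - y$2)"
  have id: "orient b c y * P1 + orient c a y * P2 + orient a b y * sd c y = 0"
    unfolding P1_def P2_def by (simp add: orient_def sd_def power2_eq_square algebra_simps)
  have e1: "sd c a = sd c y + sd a y - 2 * P1"
    unfolding P1_def by (simp add: sd_def power2_eq_square algebra_simps)
  have e2: "sd b c = sd b y + sd c y - 2 * P2"
    unfolding P2_def by (simp add: sd_def power2_eq_square algebra_simps)
  have cy: "c \<noteq> y" using la by (auto simp: orient_def)
  have Q: "sd c y > 0" by (rule sd_pos[OF cy])
  have n1: "sd a y \<ge> 0" "sd b y \<ge> 0" by (simp_all add: sd_nonneg)
  show ?thesis
  proof (cases "P1 < 0")
    case True then show ?thesis using e1 Q n1 by auto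
  next
    case False
    have "orient b c y * P1 \<ge> 0" using False la by simp
    moreover have "orient a b y * sd c y > 0" using lc Q by simp
    ultimately have "orient c a y * P2 < 0" using id by linarith
    then have "P2 < 0" using lb by (simp add: mult_less_0_iff)
    then show ?thesis using e2 Q n1 by auto
  qed
qed

lemma TOUR:
  fixes o' :: "'a \<Rightarrow> 'a \<Rightarrow> real"
  assumes anti: "\<And>u v. o' v u = - o' u v"
    and n12: "o' p1 p2 \<noteq> 0" and n13: "o' p1 p3 \<noteq> 0" and n23: "o' p2 p3 \<noteq> 0"
  shows "\<exists>m\<in>{p1,p2,p3}. \<exists>x\<in>{p1,p2,p3}. \<exists>z\<in>{p1,p2,p3}. o' m x > 0 \<and> o' m z < 0"
proof -
  have a21: "o' p2 p1 = - o' p1 p2" and a31: "o' p3 p1 = - o' p1 p3" and a32: "o' p3 p2 = - o' p2 p3"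
    by (rule anti)+
  have W: "o' m x > 0 \<Longrightarrow> o' m z < 0 \<Longrightarrow> m\<in>{p1,p2,p3} \<Longrightarrow> x\<in>{p1,p2,p3} \<Longrightarrow> z\<in>{p1,p2,p3} \<Longrightarrow> ?thesis" for m x z
    by blast
  consider (A) "o' p1 p2 > 0" "o' p1 p3 < 0" | (B) "o' p1 p2 < 0" "o' p1 p3 > 0"
    | (C) "o' p1 p2 > 0" "o' p1 p3 > 0" "o' p2 p3 > 0"
    | (D) "o' p1 p2 > 0" "o' p1 p3 > 0" "o' p2 p3 < 0"
    | (E) "o' p1 p2 < 0" "o' p1 p3 < 0" "o' p2 p3 > 0"
    | (F) "o' p1 p2 < 0" "o' p1 p3 < 0" "o' p2 p3 < 0"
    using n12 n13 n23 by linarith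
  then show ?thesis
  proof cases
    case A then show ?thesis by (intro W[of p1 p2 p3]) auto
  next
    case B then show ?thesis by (intro W[of p1 p3 p2]) auto
  next
    case C then show ?thesis using a21 by (intro W[of p2 p3 p1]) auto
  next
    case D then show ?thesis using a32 a31 by (intro W[of p3 p2 p1]) auto
  next
    case E then show ?thesis using a31 a32 by (intro W[of p3 p1 p2]) auto
  next
    case F then show ?thesis using a21 by (intro W[of p2 p1 p3]) auto
  qed
qed

lemma orient_swap13: "orient r q p = - orient p q r" by (simp add: orient_def algebra_simps)

lemma cyc': "orient p q r = orient q r p" by (simp add: orient_def algebra_simps)
lemma sw12': "orient p q r = - orient q p r" by (simp add: orient_def algebra_simps)
lemma sw23': "orient p q r = - orient p r q" by (simp add: orient_def algebra_simps)
lemma sw13': "orient p q r = - orient r q p" by (simp add: orient_def algebra_simps)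

lemma hull_seg: "convex hull {x, y} = closed_segment x y" by (simp add: segment_convex_hull)

lemma main2:
  assumes g: "generic P" and c6: "card P \<ge> 6" and aP: "a \<in> P" and bP: "b \<in> P" and ab: "a \<noteq> b"
    and diam: "\<And>x y. x \<in> P \<Longrightarrow> y \<in> P \<Longrightarrow> dist x y \<le> dist a b"
    and pos: "\<And>q. q \<in> P - {a, b} \<Longrightarrow> orient a b q > 0"
  shows "cr_max P \<ge> 1"
proof -
  have fP: "finite P" using g unfolding generic_def by simp
  have gp: "\<And>x y z. x \<in> P \<Longrightarrow> y \<in> P \<Longrightarrow> z \<in> P \<Longrightarrow> x \<noteq> y \<Longrightarrow> x \<noteq> z \<Longrightarrow> y \<noteq> z \<Longrightarrow> orient x y z \<noteq> 0"
    using gp_orient[OF g] by blast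
  define P' where "P' = P - {a, b}"
  have fP': "finite P'" using fP P'_def by simp
  have cardP': "card P' \<ge> 4" using c6 aP bP ab fP unfolding P'_def by (simp add: card_Diff_subset)
  then have neP': "P' \<noteq> {}" by auto
  define f where "f q = dt a b q / orient a b q" for q
  obtain c where cP': "c \<in> P'" and cmin: "\<And>q. q \<in> P' \<Longrightarrow> f c \<le> f q"
  proof -
    have "Min (f ` P') \<in> f ` P'" using fP' neP' by simp
    then obtain c where "c \<in> P'" "f c = Min (f ` P')" by auto
    moreover have "\<And>q. q \<in> P' \<Longrightarrow> Min (f ` P') \<le> f q" using fP' by simp
    ultimately show ?thesis using that by metis
  qed
  have cP: "c \<in> P" and ca: "c \<noteq> a" and cb: "c \<noteq> b" using cP' P'_def by auto
  have abc: "orient a b c > 0" using pos cP' P'_def by simp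
  have cq: "orient c a q > 0" if q: "q \<in> P'" "q \<noteq> c" for q
  proof -
    have oq: "orient a b q > 0" using pos q P'_def by simp
    have key: "orient a c q * sd a b = dt a b c * orient a b q - orient a b c * dt a b q"
      by (simp add: orient_def dt_def sd_def power2_eq_square algebra_simps)
    have "f c \<le> f q" using cmin q by simp
    then have "dt a b c * orient a b q \<le> dt a b q * orient a b c"
      unfolding f_def using oq abc by (simp add: divide_simps)
    then have "orient a c q * sd a b \<le> 0" using key by (simp add: algebra_simps)
    moreover have "sd a b > 0" using sd_pos[OF ab] .
    ultimately have "orient a c q \<le> 0" by (simp add: mult_le_0_iff)
    moreover have "orient a c q \<noteq> 0" using gp[of a c q] aP cP q P'_def ca by auto
    ultimately have "orient a c q < 0" by simp
    then show ?thesis using sw12'[of a c q] by linarith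
  qed
  show ?thesis
  proof (cases "\<exists>q\<in>P' - {c}. orient b c q < 0")
    case True
    then obtain q where q: "q \<in> P'" "q \<noteq> c" "orient b c q < 0" by auto
    define B where "B = P - {b, c}"
    have R: "{b, c} \<subseteq> P" using bP cP by auto
    have mR: "mst {b, c} = {{b, c}}" using mst2[OF g R] cb by auto
    have bca: "orient b c a > 0" using abc cyc'[of a b c] by linarith
    have aB: "a \<in> B" and qB: "q \<in> B" using ab ca q P'_def B_def aP by auto
    obtain s t where st: "{s, t} \<in> mst B" "s \<in> B" "t \<in> B" "orient b c s > 0" "\<not> orient b c t > 0"
      using mst_cut[OF g _ aB qB, of "\<lambda>w. orient b c w > 0"] bca q B_def by auto
    have nn: "orient c a w \<ge> 0 \<and> orient a b w \<ge> 0" if "w \<in> B" for w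
    proof (cases "w = a")
      case True then show ?thesis by (simp add: orient_def)
    next
      case False
      then have "w \<in> P'" "w \<noteq> c" using that B_def P'_def by auto
      then show ?thesis using cq pos P'_def by (simp add: less_imp_le)
    qed
    have "closed_segment s t \<inter> closed_segment b c \<noteq> {}"
    proof (rule HIT[OF st(4) _ bca])
      show "orient b c t \<le> 0" using st(5) by simp
      show "orient b c s * orient c a t - orient b c t * orient c a s \<ge> 0"
        using nn[OF st(2)] nn[OF st(3)] st(4,5)
        by (smt (verit) mult_nonneg_nonneg mult_nonpos_nonneg)
      show "orient b c s * orient a b t - orient b c t * orient a b s \<ge> 0"
        using nn[OF st(2)] nn[OF st(3)] st(4,5)
        by (smt (verit) mult_nonneg_nonneg mult_nonpos_nonneg)
    qed
    then show ?thesis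
      using cr_max_pos[OF g R, of "{b,c}" "{s,t}"] mR st(1) B_def by (simp add: hull_seg Int_commute)
  next
    case False
    have cq2: "orient b c q > 0" if "q \<in> P'" "q \<noteq> c" for q
    proof -
      have "\<not> orient b c q < 0" using False that by blast
      moreover have "orient b c q \<noteq> 0" using gp[of b c q] that P'_def cb bP cP by auto
      ultimately show ?thesis by linarith
    qed
    define I where "I = P - {a, b, c}"
    have I_P': "I = P' - {c}" unfolding I_def P'_def by auto
    have inI: "orient a b q > 0 \<and> orient b c q > 0 \<and> orient c a q > 0" if "q \<in> I" for q
      using that I_P' pos cq cq2 P'_def by auto
    have IP: "I \<subseteq> P" using I_def by auto
    have cI: "card I \<ge> 3" using cardP' unfolding I_P' by (simp add: card_Diff_singleton_if fP' \<open>c \<in> P'\<close>)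
    show ?thesis
    proof (cases "\<exists>p\<in>I. \<exists>q\<in>I. orient b p q > 0 \<and> orient p a q > 0")
      case True
      then obtain p q where pI: "p \<in> I" and qI: "q \<in> I" and pq: "orient b p q > 0" "orient p a q > 0" by auto
      have pP: "p \<in> P" using pI IP by auto
      have pa: "p \<noteq> a" "p \<noteq> b" "p \<noteq> c" using pI I_def by auto
      have R: "{a, b, p} \<subseteq> P" using aP bP pP by auto
      have mR: "mst {a, b, p} = {{a, p}, {b, p}}"
        using mst3[OF g R ab pa(1)[symmetric] pa(2)[symmetric]] diam aP bP pP by (simp add: dist_commute)
      define B where "B = P - {a, b, p}"
      have qp: "q \<noteq> p" using pq by (auto simp: orient_def)
      have qB: "q \<in> B" and cB: "c \<in> B" using qI qp I_def B_def cP pa ca cb by auto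
      have "orient c a p > 0" using inI[OF pI] by simp
      then have pac: "orient p a c < 0" using sw13'[of c a p] by linarith
      obtain s t where st: "{s, t} \<in> mst B" "s \<in> B" "t \<in> B"
          "orient b p s > 0 \<and> orient p a s > 0" "\<not> (orient b p t > 0 \<and> orient p a t > 0)"
        using mst_cut[OF g _ qB cB, of "\<lambda>w. orient b p w > 0 \<and> orient p a w > 0"] pq pac B_def by auto
      have ab_s: "orient a b s > 0" and ab_t: "orient a b t > 0"
        using st(2,3) pos B_def by auto
      have "closed_segment s t \<inter> closed_segment b p \<noteq> {} \<or> closed_segment s t \<inter> closed_segment p a \<noteq> {}"
        by (rule EXIT) (use ab_s ab_t st(4,5) in auto)
      then show ?thesis
      proof
        assume "closed_segment s t \<inter> closed_segment b p \<noteq> {}"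
        then show ?thesis
          using cr_max_pos[OF g R, of "{b,p}" "{s,t}"] mR st(1) B_def by (simp add: hull_seg Int_commute)
      next
        assume "closed_segment s t \<inter> closed_segment p a \<noteq> {}"
        then show ?thesis
          using cr_max_pos[OF g R, of "{a,p}" "{s,t}"] mR st(1) B_def
          by (simp add: hull_seg Int_commute closed_segment_commute)
      qed
    next
      case False
      have anti: "orient p a q \<le> 0" if "p \<in> I" "q \<in> I" "orient b p q > 0" for p q
      proof (rule ccontr)
        assume "\<not> orient p a q \<le> 0"
        then have "orient p a q > 0" by simp
        then show False using False that by blast
      qed
      obtain p1 p2 p3 where p123: "p1 \<in> I" "p2 \<in> I" "p3 \<in> I" "p1 \<noteq> p2" "p1 \<noteq> p3" "p2 \<noteq> p3"
      proof -
        obtain S where S: "S \<subseteq> I" "card S = 3" using ex_card[OF cI] by blast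
        then obtain x y z where "S = {x, y, z}" "x \<noteq> y" "y \<noteq> z" "x \<noteq> z" by (auto simp: card_3_iff)
        then show ?thesis using S(1) by (intro that[of x y z]) auto
      qed
      have bI: "b \<notin> I" and aI: "a \<notin> I" and cI': "c \<notin> I" using I_def by auto
      have nz: "orient b u v \<noteq> 0" if "u \<in> I" "v \<in> I" "u \<noteq> v" for u v
        using gp[of b u v] that IP bP bI by auto
      obtain m x z where mxz: "m \<in> I" "x \<in> I" "z \<in> I" "orient b m x > 0" "orient b m z < 0"
      proof -
        have "\<exists>m\<in>{p1,p2,p3}. \<exists>x\<in>{p1,p2,p3}. \<exists>z\<in>{p1,p2,p3}. orient b m x > 0 \<and> orient b m z < 0"
        proof (rule TOUR[where o'="orient b"])
          show "orient b v u = - orient b u v" for u v by (rule sw23')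
          show "orient b p1 p2 \<noteq> 0" using nz p123 by simp
          show "orient b p1 p3 \<noteq> 0" using nz p123 by simp
          show "orient b p2 p3 \<noteq> 0" using nz p123 by simp
        qed
        then obtain m x z where "m \<in> {p1,p2,p3}" "x \<in> {p1,p2,p3}" "z \<in> {p1,p2,p3}" "orient b m x > 0" "orient b m z < 0"
          by blast
        then show ?thesis using p123 by (intro that[of m x z]) auto
      qed
      have mP: "m \<in> P" and xP: "x \<in> P" and zP: "z \<in> P" using mxz IP by auto
      have mx: "m \<noteq> x" and mz: "m \<noteq> z" using mxz(4,5) by (auto simp: orient_def)
      have m_in: "orient a b m > 0" "orient b c m > 0" "orient c a m > 0" using inI[OF mxz(1)] by auto
      have x_in: "orient a b x > 0" "orient b c x > 0" "orient c a x > 0" using inI[OF mxz(2)] by auto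
      have z_in: "orient a b z > 0" "orient b c z > 0" "orient c a z > 0" using inI[OF mxz(3)] by auto
      have max: "orient m a x < 0"
      proof -
        have "orient m a x \<le> 0" using anti[OF mxz(1) mxz(2) mxz(4)] .
        moreover have "orient m a x \<noteq> 0" using gp[of m a x] mP aP xP mx aI mxz by auto
        ultimately show ?thesis by simp
      qed
      have maz: "orient m a z > 0"
      proof -
        have "orient b z m > 0" using mxz(5) sw23'[of b m z] by linarith
        then have "orient z a m \<le> 0" using anti[OF mxz(3) mxz(1)] by simp
        then have "orient m a z \<ge> 0" using sw13'[of m a z] by linarith
        moreover have "orient m a z \<noteq> 0" using gp[of m a z] mP aP zP mz aI mxz by auto
        ultimately show ?thesis by simp
      qed
      have G: "orient b c m * orient m w a + orient c a m * orient m w b + orient a b m * orient m w c = 0" for w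
        using orient_G[of b c m m w a] orient_same2[of m w] by simp
      have mcx: "orient m c x > 0"
      proof (rule ccontr)
        assume H: "\<not> orient m c x > 0"
        have 1: "orient m x a > 0" using max by (simp add: orient_def algebra_simps)
        have 2: "orient m x b > 0" using mxz(4) by (simp add: orient_def algebra_simps)
        have 3: "orient m x c \<ge> 0" using H by (simp add: orient_def algebra_simps)
        have "orient b c m * orient m x a > 0" using 1 m_in by simp
        moreover have "orient c a m * orient m x b > 0" using 2 m_in by simp
        moreover have "orient a b m * orient m x c \<ge> 0" using 3 m_in by simp
        ultimately show False using G[of x] by linarith
      qed
      have cmz: "orient c m z > 0"
      proof (rule ccontr)
        assume H: "\<not> orient c m z > 0"
        have 1: "orient m z a < 0" using maz by (simp add: orient_def algebra_simps)
        have 2: "orient m z b < 0" using mxz(5) by (simp add: orient_def algebra_simps)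
        have 3: "orient m z c \<le> 0" using H by (simp add: orient_def algebra_simps)
        have "orient b c m * orient m z a < 0" using 1 m_in by (simp add: mult_pos_neg)
        moreover have "orient c a m * orient m z b < 0" using 2 m_in by (simp add: mult_pos_neg)
        moreover have "orient a b m * orient m z c \<le> 0" using 3 m_in by (simp add: mult_nonneg_nonpos)
        ultimately show False using G[of z] by linarith
      qed
      have ma: "m \<noteq> a" "m \<noteq> b" "m \<noteq> c" using mxz(1) I_def by auto
      from OBT[OF m_in(2) m_in(3) m_in(1)]
      show ?thesis
      proof
        assume H: "sd c a > sd c m \<and> sd c a > sd a m"
        have R: "{c, a, m} \<subseteq> P" using cP aP mP by auto
        have mR: "mst {c, a, m} = {{c, m}, {a, m}}"
          using mst3[OF g R ca ma(3)[symmetric] ma(1)[symmetric]] H by (simp add: dist_le_iff_sd)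
        define B where "B = P - {c, a, m}"
        have xB: "x \<in> B" and bB: "b \<in> B" using mxz(2) mx I_def B_def bP ab cb ma by auto
        have Qx: "orient a m x > 0 \<and> orient m c x > 0" using max mcx sw12'[of a m x] by linarith
        have nQb: "\<not> orient a m b > 0" using m_in sw23'[of a b m] by linarith
        obtain s t where st: "{s, t} \<in> mst B" "s \<in> B" "t \<in> B"
            "orient a m s > 0 \<and> orient m c s > 0" "\<not> (orient a m t > 0 \<and> orient m c t > 0)"
          using mst_cut[OF g _ xB bB, of "\<lambda>w. orient a m w > 0 \<and> orient m c w > 0"] Qx nQb B_def by auto
        have cpos: "orient c a w > 0" if "w \<in> B" for w
        proof (cases "w = b")
          case True show ?thesis unfolding True using abc cyc'[of b c a] cyc'[of a b c] by linarith
        next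
          case False then have "w \<in> I" using that B_def I_def by auto
          then show ?thesis using inI by auto
        qed
        have "closed_segment s t \<inter> closed_segment a m \<noteq> {} \<or> closed_segment s t \<inter> closed_segment m c \<noteq> {}"
          by (rule EXIT) (use cpos[OF st(2)] cpos[OF st(3)] st(4,5) in auto)
        then show ?thesis
        proof
          assume "closed_segment s t \<inter> closed_segment a m \<noteq> {}"
          then show ?thesis
            using cr_max_pos[OF g R, of "{a,m}" "{s,t}"] mR st(1) B_def by (simp add: hull_seg Int_commute)
        next
          assume "closed_segment s t \<inter> closed_segment m c \<noteq> {}"
          then show ?thesis
            using cr_max_pos[OF g R, of "{c,m}" "{s,t}"] mR st(1) B_def
            by (simp add: hull_seg Int_commute closed_segment_commute)
        qed
      next
        assume H: "sd b c > sd b m \<and> sd b c > sd c m"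
        have R: "{b, c, m} \<subseteq> P" using bP cP mP by auto
        have mR: "mst {b, c, m} = {{b, m}, {c, m}}"
          using mst3[OF g R cb[symmetric] ma(2)[symmetric] ma(3)[symmetric]] H by (simp add: dist_le_iff_sd)
        define B where "B = P - {b, c, m}"
        have zB: "z \<in> B" and aB: "a \<in> B" using mxz(3) mz I_def B_def aP ab ca ma by auto
        have Qz: "orient c m z > 0 \<and> orient m b z > 0" using cmz mxz(5) sw12'[of m b z] by linarith
        have nQa: "\<not> orient c m a > 0" using m_in sw23'[of c a m] by linarith
        obtain s t where st: "{s, t} \<in> mst B" "s \<in> B" "t \<in> B"
            "orient c m s > 0 \<and> orient m b s > 0" "\<not> (orient c m t > 0 \<and> orient m b t > 0)"
          using mst_cut[OF g _ zB aB, of "\<lambda>w. orient c m w > 0 \<and> orient m b w > 0"] Qz nQa B_def by auto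
        have cpos: "orient b c w > 0" if "w \<in> B" for w
        proof (cases "w = a")
          case True show ?thesis unfolding True using abc cyc'[of a b c] by linarith
        next
          case False then have "w \<in> I" using that B_def I_def by auto
          then show ?thesis using inI by auto
        qed
        have "closed_segment s t \<inter> closed_segment c m \<noteq> {} \<or> closed_segment s t \<inter> closed_segment m b \<noteq> {}"
          by (rule EXIT) (use cpos[OF st(2)] cpos[OF st(3)] st(4,5) in auto)
        then show ?thesis
        proof
          assume "closed_segment s t \<inter> closed_segment c m \<noteq> {}"
          then show ?thesis
            using cr_max_pos[OF g R, of "{c,m}" "{s,t}"] mR st(1) B_def by (simp add: hull_seg Int_commute)
        next
          assume "closed_segment s t \<inter> closed_segment m b \<noteq> {}"
          then show ?thesis
            using cr_max_pos[OF g R, of "{b,m}" "{s,t}"] mR st(1) B_def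
            by (simp add: hull_seg Int_commute closed_segment_commute)
        qed
      qed
    qed
  qed
qed

lemma case1:
  assumes g: "generic P" and aP: "a \<in> P" and bP: "b \<in> P" and ab: "a \<noteq> b"
    and diam: "\<And>x y. x \<in> P \<Longrightarrow> y \<in> P \<Longrightarrow> dist x y \<le> dist a b"
    and q1: "q1 \<in> P - {a, b}" "orient a b q1 > 0" and q2: "q2 \<in> P - {a, b}" "orient a b q2 < 0"
  shows "cr_max P \<ge> 1"
proof -
  define B where "B = P - {a, b}"
  have R: "{a, b} \<subseteq> P" using aP bP by auto
  have mR: "mst {a, b} = {{a, b}}" using mst2[OF g R ab] .
  have q1B: "q1 \<in> B" and q2B: "q2 \<in> B" using q1 q2 B_def by auto
  obtain s t where st: "{s, t} \<in> mst B" "s \<in> B" "t \<in> B" "orient a b s > 0" "\<not> orient a b t > 0"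
    using mst_cut[OF g _ q1B q2B, of "\<lambda>w. orient a b w > 0"] q1 q2 B_def by auto
  have sP: "s \<in> P" and tP: "t \<in> P" using st B_def by auto
  obtain m where m: "0 \<le> m" "m \<le> 1" "orient a b ((1 - m) *\<^sub>R s + m *\<^sub>R t) = 0"
  proof -
    have "orient a b t \<le> 0" using st(5) by simp
    from LINE[OF st(4) this] show ?thesis using that by blast
  qed
  define z where "z = (1 - m) *\<^sub>R s + m *\<^sub>R t"
  have slab: "dt a b w \<ge> 0 \<and> dt b a w \<ge> 0" if "w \<in> P" for w
  proof -
    have "sd w b \<le> sd a b" "sd w a \<le> sd a b"
      using diam[OF that bP] diam[OF that aP] by (simp_all add: dist_le_iff_sd)
    moreover have "2 * dt a b w = sd w a + sd a b - sd w b" by (rule dt_sd)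
    moreover have "2 * dt b a w = sd w b + sd b a - sd w a" by (rule dt_sd)
    moreover have "sd b a = sd a b" by (rule sd_comm[symmetric])
    moreover have "sd w a \<ge> 0" "sd w b \<ge> 0" by (simp_all add: sd_nonneg)
    ultimately show ?thesis by linarith
  qed
  have h1: "dt a b z \<ge> 0" unfolding z_def dt_affine using slab[OF sP] slab[OF tP] m(1,2) by simp
  have h2: "dt b a z \<ge> 0" unfolding z_def dt_affine using slab[OF sP] slab[OF tP] m(1,2) by simp
  have "z \<in> closed_segment a b" by (rule SEG2[OF ab _ h1 h2]) (use m(3) z_def in simp)
  moreover have "z \<in> closed_segment s t" unfolding z_def by (rule in_seg[OF m(1,2)])
  ultimately have "convex hull {a, b} \<inter> convex hull {s, t} \<noteq> {}" by (auto simp: hull_seg)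
  then show ?thesis using cr_max_pos[OF g R, of "{a,b}" "{s,t}"] mR st(1) B_def by simp
qed

theorem theorem2:
  fixes P :: "point set"
  assumes "generic P" and "card P > 5"
  shows "cr_max P \<ge> 1"
proof -
  have g: "generic P" by fact
  have fP: "finite P" using g unfolding generic_def by simp
  have c6: "card P \<ge> 6" using assms(2) by simp
  define F where "F = (\<lambda>(x, y). dist x y) ` (P \<times> P)"
  have fF: "finite F" unfolding F_def using fP by simp
  have neP: "P \<noteq> {}" using c6 by auto
  then have neF: "F \<noteq> {}" unfolding F_def by auto
  have "Max F \<in> F" using fF neF by simp
  then obtain a b where abP: "a \<in> P" "b \<in> P" and Mab: "Max F = dist a b" unfolding F_def by auto
  have diam: "dist x y \<le> dist a b" if "x \<in> P" "y \<in> P" for x y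
  proof -
    have "dist x y \<in> F" unfolding F_def using that by force
    then show ?thesis using Max_ge[OF fF] Mab by metis
  qed
  have ab: "a \<noteq> b"
  proof
    assume "a = b"
    then have "\<forall>x\<in>P. \<forall>y\<in>P. x = y" using diam by fastforce
    then have "card P \<le> Suc 0" by (simp add: card_le_Suc0_iff_eq[OF fP])
    then show False using c6 by simp
  qed
  have nz: "orient a b q \<noteq> 0" if "q \<in> P - {a, b}" for q
    using gp_orient[OF g, of a b q] abP ab that by auto
  show ?thesis
  proof (cases "\<exists>q1\<in>P - {a, b}. \<exists>q2\<in>P - {a, b}. orient a b q1 > 0 \<and> orient a b q2 < 0")
    case True
    then obtain q1 q2 where "q1 \<in> P - {a, b}" "q2 \<in> P - {a, b}" "orient a b q1 > 0" "orient a b q2 < 0" by blast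
    then show ?thesis by (intro case1[OF g abP ab diam, of q1 q2])
  next
    case False
    show ?thesis
    proof (cases "\<forall>q\<in>P - {a, b}. orient a b q > 0")
      case True
      have allpos: "\<And>q. q \<in> P - {a, b} \<Longrightarrow> orient a b q > 0" using True by blast
      show ?thesis by (rule main2[OF g c6 abP ab diam allpos])
    next
      case F2: False
      then obtain q0 where q0: "q0 \<in> P - {a, b}" "\<not> orient a b q0 > 0" by blast
      then have "orient a b q0 < 0" using nz[OF q0(1)] by linarith
      then have allneg: "orient a b q < 0" if "q \<in> P - {a, b}" for q
      proof -
        have "\<not> orient a b q > 0"
        proof
          assume "orient a b q > 0"
          then have "\<exists>q1\<in>P - {a, b}. \<exists>q2\<in>P - {a, b}. orient a b q1 > 0 \<and> orient a b q2 < 0"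
            using that q0(1) \<open>orient a b q0 < 0\<close> by blast
          then show False using False by simp
        qed
        then show ?thesis using nz[OF that] by linarith
      qed
      have ba1: "orient b a q > 0" if "q \<in> P - {b, a}" for q
      proof -
        have "q \<in> P - {a, b}" using that by auto
        then show ?thesis using allneg[of q] sw12'[of b a q] by linarith
      qed
      have ba2: "dist x y \<le> dist b a" if "x \<in> P" "y \<in> P" for x y
        using diam[OF that] by (simp add: dist_commute)
      show ?thesis by (rule main2[OF g c6 abP(2) abP(1) ab[symmetric] ba2 ba1])
    qed
  qed
qed

end
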